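(* Let $G$ be any simple graph on $n$ vertices with chromatic number $k=\chi(G)$. Then $$\varepsilon(G)\ge\frac{n!}{k^{\,n-k}\,k!}.$$
   Context: For an undirected simple graph $G=(V,E)$, $\varepsilon(G)$ denotes the maximum, over all acyclic orientations of $E$, of the number of linear extensions of the partial order induced on $V$ (where $u<v$ iff there is a directed path from $u$ to $v$; a linear extension of a poset on an $n$-element set is an order-preserving bijection onto $[n]$). *)

theory Defs
  imports Complex_Main "HOL-Library.FuncSet"
begin

text \<open>A finite simple graph: finite vertex set V, edge relation E that is
symmetric, irreflexive and contained in V x V (each undirected edge {u,v}
is represented by both pairs (u,v) and (v,u)).\<close>

definition simple_graph :: "'a set \<Rightarrow> ('a \<times> 'a) set \<Rightarrow> bool" where
  "simple_graph V E \<longleftrightarrow> finite V \<and> E \<subseteq> V \<times> V \<and> sym E \<and> irrefl E"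

definition proper_colouring :: "'a set \<Rightarrow> ('a \<times> 'a) set \<Rightarrow> nat \<Rightarrow> ('a \<Rightarrow> nat) \<Rightarrow> bool" where
  "proper_colouring V E k c \<longleftrightarrow> (\<forall>v\<in>V. c v < k) \<and> (\<forall>(u,v)\<in>E. c u \<noteq> c v)"

definition chromatic_number :: "'a set \<Rightarrow> ('a \<times> 'a) set \<Rightarrow> nat" where
  "chromatic_number V E = (LEAST k. \<exists>c. proper_colouring V E k c)"

definition acyclic_orientation :: "('a \<times> 'a) set \<Rightarrow> ('a \<times> 'a) set \<Rightarrow> bool" where
  "acyclic_orientation E D \<longleftrightarrow> D \<subseteq> E \<and>
     (\<forall>(u,v)\<in>E. ((u,v) \<in> D) \<noteq> ((v,u) \<in> D)) \<and> acyclic D"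

definition linear_extensions :: "'a set \<Rightarrow> ('a \<times> 'a) set \<Rightarrow> ('a \<Rightarrow> nat) set" where
  "linear_extensions V D =
     {f \<in> extensional V. bij_betw f V {1..card V} \<and>
        (\<forall>u\<in>V. \<forall>v\<in>V. (u,v) \<in> D\<^sup>+ \<longrightarrow> f u < f v)}"

definition eps :: "'a set \<Rightarrow> ('a \<times> 'a) set \<Rightarrow> nat" where
  "eps V E = Max {card (linear_extensions V D) | D. acyclic_orientation E D}"

end

theory Submission
  imports Defs
begin


lemma fact_nat_red: "m \<ge> 1 \<Longrightarrow> (fact m :: nat) = m * fact (m - 1)"
  by (cases m) auto

definition SS :: "'a set \<Rightarrow> ('a \<Rightarrow> nat) \<Rightarrow> ('a \<Rightarrow> nat) set" where
 "SS V c = {f \<in> extensional V. bij_betw f V {1..card V} \<and> (\<forall>u\<in>V. \<forall>v\<in>V. c u < c v \<longrightarrow> f u < f v)}"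

definition PP :: "'a set \<Rightarrow> ('a \<Rightarrow> nat) \<Rightarrow> nat \<Rightarrow> nat" where
 "PP V c K = (\<Prod>i<K. fact (card {v\<in>V. c v = i}))"

lemma finite_SS: "finite V \<Longrightarrow> finite (SS V c)"
proof -
  assume "finite V"
  have "SS V c \<subseteq> PiE V (\<lambda>_. {1..card V})"
    unfolding SS_def PiE_def bij_betw_def by auto
  then show ?thesis using finite_PiE[OF \<open>finite V\<close>, of "\<lambda>_. {1..card V}"]
    using finite_subset by blast
qed

lemma PP_remove:
  assumes "finite V" "w \<in> V" "c w < K"
  shows "PP V c K = card {v\<in>V. c v = c w} * PP (V - {w}) c K"
proof -
  have K: "{..<K} = insert (c w) ({..<K} - {c w})" using assms by auto
  have a: "PP V c K = fact (card {v\<in>V. c v = c w}) * (\<Prod>i\<in>{..<K} - {c w}. fact (card {v\<in>V. c v = i}))"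
    unfolding PP_def using assms(3) by (simp add: prod.remove)
  have b: "PP (V-{w}) c K = fact (card {v\<in>V-{w}. c v = c w}) * (\<Prod>i\<in>{..<K} - {c w}. fact (card {v\<in>V-{w}. c v = i}))"
    unfolding PP_def using assms(3) by (simp add: prod.remove)
  have c: "(\<Prod>i\<in>{..<K} - {c w}. fact (card {v\<in>V-{w}. c v = i})) = (\<Prod>i\<in>{..<K} - {c w}. fact (card {v\<in>V. c v = i}) :: nat)"
  proof (intro prod.cong refl)
    fix i assume "i \<in> {..<K} - {c w}"
    then have "{v\<in>V-{w}. c v = i} = {v\<in>V. c v = i}" by auto
    then show "fact (card {v\<in>V-{w}. c v = i}) = (fact (card {v\<in>V. c v = i}) :: nat)" by simp
  qed
  have d: "{v\<in>V-{w}. c v = c w} = {v\<in>V. c v = c w} - {w}" by auto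
  have fin: "finite {v\<in>V. c v = c w}" using assms by auto
  have wC: "w \<in> {v\<in>V. c v = c w}" using assms(2) by simp
  have ge: "card {v\<in>V. c v = c w} \<ge> 1"
    using card_gt_0_iff[of "{v\<in>V. c v = c w}"] fin wC by auto
  have e: "card {v\<in>V-{w}. c v = c w} = card {v\<in>V. c v = c w} - 1"
    using d card_Diff_singleton[OF wC] by (simp only:)
  have f: "(fact (card {v\<in>V. c v = c w}) :: nat) = card {v\<in>V. c v = c w} * fact (card {v\<in>V. c v = c w} - 1)"
    using ge by (rule fact_nat_red)
  show ?thesis using a b c e f by simp
qed

lemma main_count:
  assumes "finite V" "\<forall>v\<in>V. c v < K"
  shows "PP V c K \<le> card (SS V c)"
  using assms
proof (induction V rule: finite_remove_induct)
  case empty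
  have "(\<lambda>_. undefined) \<in> SS {} c" unfolding SS_def by (auto simp: bij_betw_def)
  then have "card (SS {} c) \<ge> 1" using finite_SS[of "{}" c]
    by (metis One_nat_def Suc_leI card_gt_0_iff empty_iff finite.emptyI)
  then show ?case unfolding PP_def by simp
next
  case (remove V)
  define n where "n = card V"
  define t where "t = Max (c ` V)"
  define C where "C = {v\<in>V. c v = t}"
  have tin: "t \<in> c ` V" unfolding t_def using remove.hyps by auto
  have tmax: "\<forall>v\<in>V. c v \<le> t" unfolding t_def using remove.hyps by auto
  have Cne: "C \<noteq> {}" using tin unfolding C_def by auto
  have Cfin: "finite C" unfolding C_def using remove.hyps by auto
  have n1: "n \<ge> 1" unfolding n_def using remove.hyps by (simp add: Suc_leI card_gt_0_iff)
  define F where "F = (\<lambda>(w::'a, g::'a \<Rightarrow> nat). g(w := n))"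
  define Sig where "Sig = (SIGMA w:C. SS (V - {w}) c)"
  have cardV: "\<And>w. w \<in> V \<Longrightarrow> card (V - {w}) = n - 1" unfolding n_def using remove.hyps by simp
  have img: "F ` Sig \<subseteq> SS V c"
  proof
    fix f assume "f \<in> F ` Sig"
    then obtain w g where wg: "w \<in> C" "g \<in> SS (V - {w}) c" "f = g(w := n)"
      unfolding Sig_def F_def by auto
    have wV: "w \<in> V" "c w = t" using wg C_def by auto
    have ge: "g \<in> extensional (V - {w})" and gb: "bij_betw g (V - {w}) {1..n-1}"
      and go: "\<forall>u\<in>V-{w}. \<forall>v\<in>V-{w}. c u < c v \<longrightarrow> g u < g v"
      using wg(2) cardV[OF wV(1)] unfolding SS_def by auto
    have grange: "\<And>x. x \<in> V - {w} \<Longrightarrow> g x \<in> {1..n-1}" using gb bij_betwE by blast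
    have fe: "f \<in> extensional V" using ge wg(3) wV unfolding extensional_def by auto
    have fb0: "bij_betw f (V - {w}) {1..n-1}"
      using gb wg(3) bij_betw_cong[of "V - {w}" f g "{1..n-1}"] by auto
    have fb1: "bij_betw f ((V - {w}) \<union> {w}) ({1..n-1} \<union> {f w})"
      using fb0 wg(3) n1 by (intro notIn_Un_bij_betw) auto
    have "(V - {w}) \<union> {w} = V" using wV by auto
    moreover have "{1..n-1} \<union> {f w} = {1..n}" using wg(3) n1 by auto
    ultimately have fb: "bij_betw f V {1..card V}" using fb1 n_def by simp
    have fo: "\<forall>u\<in>V. \<forall>v\<in>V. c u < c v \<longrightarrow> f u < f v"
    proof (intro ballI impI)
      fix u v assume uv: "u \<in> V" "v \<in> V" "c u < c v"
      have "u \<noteq> w" using uv tmax wV by force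
      show "f u < f v"
      proof (cases "v = w")
        case True
        then show ?thesis using grange[of u] \<open>u \<noteq> w\<close> uv wg(3) n1 by auto
      next
        case False
        then show ?thesis using go uv \<open>u \<noteq> w\<close> wg(3) by auto
      qed
    qed
    show "f \<in> SS V c" unfolding SS_def using fe fb fo by auto
  qed
  have inj: "inj_on F Sig"
  proof (rule inj_onI)
    fix x y assume x: "x \<in> Sig" and y: "y \<in> Sig" and eq: "F x = F y"
    obtain w1 g1 where x': "x = (w1, g1)" "w1 \<in> C" "g1 \<in> SS (V - {w1}) c" using x Sig_def by auto
    obtain w2 g2 where y': "y = (w2, g2)" "w2 \<in> C" "g2 \<in> SS (V - {w2}) c" using y Sig_def by auto
    have eq': "g1(w1 := n) = g2(w2 := n)" using eq x' y' F_def by simp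
    have w1V: "w1 \<in> V" "w2 \<in> V" using x' y' C_def by auto
    have w: "w1 = w2"
    proof (rule ccontr)
      assume ne: "w1 \<noteq> w2"
      have "bij_betw g2 (V - {w2}) {1..n-1}" using y'(3) cardV[OF w1V(2)] unfolding SS_def by auto
      then have "g2 w1 \<in> {1..n-1}" using ne w1V bij_betwE by blast
      moreover have "g2 w1 = n" using fun_cong[OF eq', of w1] ne by simp
      ultimately show False using n1 by auto
    qed
    have "g1 = g2"
    proof
      fix z show "g1 z = g2 z"
      proof (cases "z = w1")
        case True
        have "g1 \<in> extensional (V - {w1})" "g2 \<in> extensional (V - {w2})" using x'(3) y'(3) SS_def by auto
        then show ?thesis using True w unfolding extensional_def by auto
      next
        case False
        then show ?thesis using fun_cong[OF eq', of z] w by auto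
      qed
    qed
    then show "x = y" using x' y' w by simp
  qed
  have "card Sig \<le> card (SS V c)"
    using card_inj_on_le[OF inj img finite_SS[OF remove(1)]] .
  moreover have "card Sig = (\<Sum>w\<in>C. card (SS (V - {w}) c))"
    unfolding Sig_def using Cfin remove(1) by (simp add: finite_SS)
  moreover have "(\<Sum>w\<in>C. PP (V - {w}) c K) \<le> (\<Sum>w\<in>C. card (SS (V - {w}) c))"
  proof (intro sum_mono)
    fix w assume "w \<in> C"
    then have "w \<in> V" using C_def by auto
    then show "PP (V - {w}) c K \<le> card (SS (V - {w}) c)"
    proof -
      have "\<forall>v\<in>V-{w}. c v < K" using remove.prems by blast
      then show ?thesis using remove.IH[of w] \<open>w \<in> V\<close> by blast
    qed
  qed
  moreover have "(\<Sum>w\<in>C. PP (V - {w}) c K) = PP V c K"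
  proof -
    have "card C * (\<Sum>w\<in>C. PP (V - {w}) c K) = (\<Sum>w\<in>C. card C * PP (V - {w}) c K)"
      by (simp add: sum_distrib_left)
    also have "\<dots> = (\<Sum>w\<in>C. PP V c K)"
    proof (intro sum.cong refl)
      fix w assume w: "w \<in> C"
      then have "w \<in> V" "c w = t" using C_def by auto
      then show "card C * PP (V - {w}) c K = PP V c K"
      proof -
        have "c w < K" using remove.prems \<open>w \<in> V\<close> by blast
        then have "PP V c K = card {v\<in>V. c v = c w} * PP (V - {w}) c K"
          using PP_remove[of V w c K] remove.hyps(1) \<open>w \<in> V\<close> by blast
        then show ?thesis using \<open>c w = t\<close> C_def by simp
      qed
    qed
    also have "\<dots> = card C * PP V c K" by simp
    finally show ?thesis using Cne Cfin by simp
  qed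
  ultimately show ?case by linarith
qed

lemma arith_bound:
  fixes a :: "'b \<Rightarrow> nat"
  assumes "finite I" "\<forall>i\<in>I. a i \<ge> 1" "sum a I = n"
  shows "fact n \<le> card I ^ (n - card I) * fact (card I) * (\<Prod>i\<in>I. fact (a i) :: nat)"
  using assms
proof (induction n arbitrary: a)
  case 0
  have "I = {}"
  proof (rule ccontr)
    assume "I \<noteq> {}"
    then obtain i where i: "i \<in> I" by blast
    have "a i \<le> sum a I" using member_le_sum[OF i _ 0(1), of a] by simp
    then show False using 0 i by auto
  qed
  then show ?case by simp
next
  case (Suc m)
  show ?case
  proof (cases "\<forall>i\<in>I. a i = 1")
    case True
    then have "sum a I = card I" by simp
    then show ?thesis using True Suc.prems by simp
  next
    case False
    then obtain i0 where i0a: "i0 \<in> I" "a i0 \<noteq> 1" by blast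
    then have i0: "i0 \<in> I" "a i0 \<ge> 2" using Suc.prems(2) by (auto simp: le_Suc_eq)
    have ne: "I \<noteq> {}" using i0 by auto
    have Min: "Max (a ` I) \<in> a ` I" using ne Suc.prems(1) by simp
    then obtain j where j1: "j \<in> I" "a j = Max (a ` I)" by auto
    have j: "j \<in> I" "\<forall>i\<in>I. a i \<le> a j" using j1 Suc.prems(1) by auto
    have aj2: "a j \<ge> 2" using j i0 by force
    define k where "k = card I"
    have "Suc m = sum a I" using Suc.prems by simp
    also have "\<dots> \<le> sum (\<lambda>_. a j) I" using j by (intro sum_mono) auto
    also have "\<dots> = k * a j" by (simp add: k_def)
    finally have nle: "Suc m \<le> k * a j" .
    define a' where "a' = a(j := a j - 1)"
    have s1: "sum a I = a j + sum a (I - {j})" using j Suc.prems(1) by (simp add: sum.remove)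
    have s2: "sum a' I = a' j + sum a' (I - {j})" using j Suc.prems(1) by (simp add: sum.remove)
    have s3: "sum a' (I - {j}) = sum a (I - {j})" unfolding a'_def by (intro sum.cong) auto
    have sa': "sum a' I = m" using s1 s2 s3 Suc.prems(3) aj2 by (simp add: a'_def)
    have a'1: "\<forall>i\<in>I. a' i \<ge> 1" using Suc.prems(2) aj2 by (auto simp add: a'_def)
    have IH: "fact m \<le> k ^ (m - k) * fact k * (\<Prod>i\<in>I. fact (a' i) :: nat)"
      using Suc.IH[OF Suc.prems(1) a'1 sa'] by (simp add: k_def)
    have p1: "(\<Prod>i\<in>I. fact (a i) :: nat) = fact (a j) * (\<Prod>i\<in>I-{j}. fact (a i))"
      using j Suc.prems(1) by (simp add: prod.remove)
    have p2: "(\<Prod>i\<in>I. fact (a' i) :: nat) = fact (a j - 1) * (\<Prod>i\<in>I-{j}. fact (a i))"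
    proof -
      have "(\<Prod>i\<in>I. fact (a' i) :: nat) = fact (a' j) * (\<Prod>i\<in>I-{j}. fact (a' i))"
        using j Suc.prems(1) by (simp add: prod.remove)
      moreover have "(\<Prod>i\<in>I-{j}. fact (a' i) :: nat) = (\<Prod>i\<in>I-{j}. fact (a i))"
        by (intro prod.cong) (auto simp: a'_def)
      ultimately show ?thesis by (simp add: a'_def)
    qed
    have fj: "(fact (a j) :: nat) = a j * fact (a j - 1)" using aj2 by (intro fact_nat_red) simp
    have p3: "(\<Prod>i\<in>I. fact (a i) :: nat) = a j * (\<Prod>i\<in>I. fact (a' i))" using p1 p2 fj by simp
    have km: "k \<le> m"
    proof -
      have "sum (\<lambda>_. 1::nat) I < sum a I"
        using Suc.prems(1,2) i0 by (intro sum_strict_mono_ex1) (auto intro!: bexI[of _ i0])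
      then show ?thesis using Suc.prems(3) by (simp add: k_def)
    qed
    have "fact (Suc m) = Suc m * (fact m :: nat)" by simp
    also have "\<dots> \<le> (k * a j) * (k ^ (m - k) * fact k * (\<Prod>i\<in>I. fact (a' i)))"
      using nle IH by (intro mult_le_mono) auto
    also have "\<dots> = k ^ (Suc m - k) * fact k * (a j * (\<Prod>i\<in>I. fact (a' i)))"
      using km by (simp add: Suc_diff_le algebra_simps)
    finally show ?thesis using p3 by (simp add: k_def)
  qed
qed


lemma trancl_col:
  assumes "(x,y) \<in> {(u,v). (u,v) \<in> E \<and> c u < (c v::nat)}\<^sup>+"
  shows "c x < c y"
  using assms by (induction rule: trancl_induct) auto

theorem corollary4p4:
  fixes V :: "'a set" and E :: "('a \<times> 'a) set"
  assumes "simple_graph V E"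
  shows "real (eps V E) \<ge>
    fact (card V) / (real (chromatic_number V E) ^ (card V - chromatic_number V E)
                     * fact (chromatic_number V E))"
proof -
  have fin: "finite V" and EV: "E \<subseteq> V \<times> V" and sy: "sym E" and ir: "irrefl E"
    using assms unfolding simple_graph_def by auto
  define n where "n = card V"
  define k where "k = chromatic_number V E"
  obtain h where h: "bij_betw h V {0..<n}" using ex_bij_betw_finite_nat[OF fin] n_def by blast
  have "proper_colouring V E n h"
    unfolding proper_colouring_def
  proof (intro conjI ballI)
    fix v assume "v \<in> V" then show "h v < n" using h bij_betwE by fastforce
  next
    fix e assume e: "e \<in> E"
    obtain u v where uv: "e = (u,v)" by (cases e)
    have "u \<noteq> v" using ir e uv unfolding irrefl_def by auto
    moreover have "u \<in> V" "v \<in> V" using EV e uv by auto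
    ultimately have "h u \<noteq> h v" using h unfolding bij_betw_def inj_on_def by blast
    then show "case e of (u, v) \<Rightarrow> h u \<noteq> h v" using uv by simp
  qed
  then have ex: "\<exists>c. proper_colouring V E n c" by blast
  have "\<exists>c. proper_colouring V E k c"
    unfolding k_def chromatic_number_def by (rule LeastI_ex) (use ex in blast)
  then obtain c where c: "proper_colouring V E k c" by blast
  have cb: "\<forall>v\<in>V. c v < k" and ce: "\<forall>(u,v)\<in>E. c u \<noteq> c v"
    using c unfolding proper_colouring_def by auto
  have nonempty: "\<forall>i<k. \<exists>v\<in>V. c v = i"
  proof (intro allI impI, rule ccontr)
    fix i assume ik: "i < k" and no: "\<not> (\<exists>v\<in>V. c v = i)"
    define c' where "c' = (\<lambda>v. if c v > i then c v - 1 else c v)"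
    have "proper_colouring V E (k - 1) c'"
      unfolding proper_colouring_def
    proof (intro conjI ballI)
      fix v assume v: "v \<in> V"
      then have "c v < k" "c v \<noteq> i" using cb no by auto
      then show "c' v < k - 1" using ik unfolding c'_def by auto
    next
      fix e assume e: "e \<in> E"
      obtain u v where uv: "e = (u,v)" by (cases e)
      have "u \<in> V" "v \<in> V" using EV e uv by auto
      then have "c u \<noteq> i" "c v \<noteq> i" using no by auto
      moreover have "c u \<noteq> c v" using ce e uv by auto
      ultimately have "c' u \<noteq> c' v" unfolding c'_def by auto
      then show "case e of (u, v) \<Rightarrow> c' u \<noteq> c' v" using uv by simp
    qed
    then have "k \<le> k - 1" unfolding k_def chromatic_number_def
      by (metis (mono_tags, lifting) Least_le k_def chromatic_number_def)
    then show False using ik by simp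
  qed
  define D where "D = {(u,v). (u,v) \<in> E \<and> c u < c v}"
  have acy: "acyclic_orientation E D"
    unfolding acyclic_orientation_def
  proof (intro conjI)
    show "D \<subseteq> E" unfolding D_def by auto
    show "\<forall>(u, v)\<in>E. ((u, v) \<in> D) \<noteq> ((v, u) \<in> D)"
    proof (intro ballI)
      fix e assume e: "e \<in> E"
      obtain u v where uv: "e = (u,v)" by (cases e)
      have "(v,u) \<in> E" using sy e uv unfolding sym_def by auto
      moreover have "c u \<noteq> c v" using ce e uv by auto
      ultimately show "case e of (u, v) \<Rightarrow> ((u, v) \<in> D) \<noteq> ((v, u) \<in> D)"
        using uv e unfolding D_def by auto
    qed
    show "acyclic D" unfolding acyclic_def
    proof
      fix x
      show "(x, x) \<notin> D\<^sup>+"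
      proof
        assume "(x, x) \<in> D\<^sup>+"
        then have "c x < c x" unfolding D_def by (rule trancl_col)
        then show False by simp
      qed
    qed
  qed
  have sub: "SS V c \<subseteq> linear_extensions V D"
  proof
    fix f assume "f \<in> SS V c"
    then have f1: "f \<in> extensional V" "bij_betw f V {1..card V}"
      and f2: "\<forall>u\<in>V. \<forall>v\<in>V. c u < c v \<longrightarrow> f u < f v" unfolding SS_def by auto
    have "\<forall>u\<in>V. \<forall>v\<in>V. (u,v) \<in> D\<^sup>+ \<longrightarrow> f u < f v"
    proof (intro ballI impI)
      fix u v assume "u \<in> V" "v \<in> V" "(u,v) \<in> D\<^sup>+"
      then have "c u < c v" unfolding D_def by (blast intro: trancl_col)
      then show "f u < f v" using f2 \<open>u \<in> V\<close> \<open>v \<in> V\<close> by blast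
    qed
    then show "f \<in> linear_extensions V D"
      unfolding linear_extensions_def using f1 by blast
  qed
  have finLE: "finite (linear_extensions V D)"
  proof -
    have "linear_extensions V D \<subseteq> PiE V (\<lambda>_. {1..card V})"
      unfolding linear_extensions_def PiE_def bij_betw_def by auto
    then show ?thesis using finite_PiE[OF fin, of "\<lambda>_. {1..card V}"] finite_subset by blast
  qed
  have finE: "finite E" using EV fin by (meson finite_SigmaI finite_subset)
  have finS: "finite {card (linear_extensions V D) | D. acyclic_orientation E D}"
  proof -
    have "{card (linear_extensions V D) | D. acyclic_orientation E D}
          \<subseteq> (\<lambda>D. card (linear_extensions V D)) ` Pow E"
      unfolding acyclic_orientation_def by auto
    then show ?thesis using finE finite_subset by blast
  qed
  have epsge: "card (linear_extensions V D) \<le> eps V E"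
    unfolding eps_def using acy finS by (intro Max_ge) auto
  have "PP V c k \<le> card (SS V c)" using main_count[OF fin cb] .
  also have "\<dots> \<le> card (linear_extensions V D)" using card_mono[OF finLE sub] .
  finally have PPle: "PP V c k \<le> eps V E" using epsge by linarith
  have cls: "\<forall>i\<in>{..<k}. card {v\<in>V. c v = i} \<ge> 1"
  proof
    fix i assume "i \<in> {..<k}"
    then obtain v where "v \<in> V" "c v = i" using nonempty by auto
    then have "card {v\<in>V. c v = i} > 0" using fin card_gt_0_iff by fastforce
    then show "card {v\<in>V. c v = i} \<ge> 1" by simp
  qed
  have sm: "(\<Sum>i\<in>{..<k}. card {v\<in>V. c v = i}) = n"
  proof -
    have "(\<Sum>i\<in>{..<k}. sum (\<lambda>_. 1::nat) {v\<in>V. c v = i}) = sum (\<lambda>_. 1) V"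
      using sum.group[OF fin, of "{..<k}" c "\<lambda>_. 1::nat"] cb by auto
    then show ?thesis unfolding n_def by simp
  qed
  have N: "fact n \<le> k ^ (n - k) * fact k * PP V c k"
    using arith_bound[OF _ cls sm] unfolding PP_def by simp
  also have "\<dots> \<le> k ^ (n - k) * fact k * eps V E" using PPle by simp
  finally have N2: "fact n \<le> k ^ (n - k) * fact k * eps V E" .
  then have N3: "(fact n :: real) \<le> real k ^ (n - k) * fact k * real (eps V E)"
  proof -
    have "real (fact n) \<le> real (k ^ (n - k) * fact k * eps V E)" using N2 by (simp only: of_nat_le_iff)
    then show ?thesis by simp
  qed
  show ?thesis
  proof (cases "real k ^ (n - k) * fact k = 0")
    case True
    have "(fact n :: real) / (real k ^ (n - k) * fact k) \<le> real (eps V E)"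
      by (subst True) simp
    then show ?thesis unfolding n_def k_def .
  next
    case False
    have "real k ^ (n - k) * fact k \<ge> 0" by simp
    then have pos: "real k ^ (n - k) * fact k > 0" using False by linarith
    have "(fact n :: real) / (real k ^ (n - k) * fact k) \<le> real (eps V E)"
      unfolding pos_divide_le_eq[OF pos] using N3 by (simp only: mult.commute)
    then show ?thesis unfolding n_def k_def .
  qed
qed

end
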